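(* Let $a_0=0$ and let $a_1<a_2<\cdots$ be the increasing enumeration of the set $\{m\ge1:\ c_m=1\}$ (so that, for $m\ge1$, $c_m=1$ if and only if $m=a_n$ for some $n>0$). Then $a_1=1$, $a_2=2$, $a_3=7$, and for all $n\ge 1$: $$a_{4n}=a_{4n-1}+1,\quad a_{4n+1}=a_{4n-1}+2,\quad a_{4n+2}=a_{4n-1}+3,\quad a_{8n+3}=a_{8n}+7,\quad a_{8n+7}=4a_{4n+3}+3.$$
   Context: For $n\in\mathbb{N}$ let $s_2(n)$ be the sum of the binary digits of $n$ and $t_n=s_2(n)\bmod 2$ (the Prouhet–Thue–Morse sequence). Let $F(X)=\sum_{n\ge1}t_nX^n\in\mathbb{F}_2[[X]]$ and let $G(X)=\sum_{n\ge1}c_nX^n\in\mathbb{F}_2[[X]]$ be its compositional inverse, i.e. $F(G(X))=G(F(X))=X$. The $c_n$ are identified with integers in $\{0,1\}$. *)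

theory Defs
  imports "HOL-Computational_Algebra.Formal_Power_Series" "HOL-Library.Z2" "HOL-Library.Infinite_Set"
begin

fun s2 :: "nat \<Rightarrow> nat" where
  "s2 n = (if n = 0 then 0 else n mod 2 + s2 (n div 2))"

definition tm :: "nat \<Rightarrow> bit" where
  "tm n = (if odd (s2 n) then 1 else 0)"

definition TM_F :: "bit fps" where
  "TM_F = Abs_fps (\<lambda>n. if n = 0 then 0 else tm n)"

definition TM_G :: "bit fps" where
  "TM_G = fps_inv TM_F"

definition cG :: "nat \<Rightarrow> nat" where
  "cG n = (if fps_nth TM_G n = 1 then 1 else 0)"

definition onesG :: "nat set" where
  "onesG = {m. m \<ge> 1 \<and> cG m = 1}"

definition aG :: "nat \<Rightarrow> nat" where
  "aG n = (if n = 0 then 0 else enumerate onesG (n - 1))"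

end

theory Submission imports Defs begin
lemma bit_add_self[simp]: "(x::bit) + x = 0" by (cases x) simp_all
lemma bit_mult_self[simp]: "(x::bit) * x = x" by (cases x) simp_all
lemma sum_sym_char2:
  fixes f :: "nat \<Rightarrow> bit"
  assumes sym: "\<And>i. i \<le> n \<Longrightarrow> f (n - i) = f i"
  shows "(\<Sum>i=0..n. f i) = (if even n then f (n div 2) else 0)"
proof -
  let ?L = "{i. 2*i < n}" and ?M = "{i. 2*i = n}" and ?R = "{i. i \<le> n \<and> n < 2*i}"
  have fin: "finite ?L" "finite ?M" "finite ?R" by (auto intro: finite_subset[of _ "{0..n}"])
  have split: "{0..n} = ?L \<union> ?M \<union> ?R" by auto
  have e: "\<And>a b::bit. a + b + a = b" by (case_tac a; case_tac b) simp_all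
  have "(\<Sum>i=0..n. f i) = sum f ?L + sum f ?M + sum f ?R"
  proof -
    have "sum f (?L \<union> ?M \<union> ?R) = sum f (?L \<union> ?M) + sum f ?R"
      by (rule sum.union_disjoint) (use fin in auto)
    also have "sum f (?L \<union> ?M) = sum f ?L + sum f ?M"
      by (rule sum.union_disjoint) (use fin in auto)
    finally show ?thesis unfolding split .
  qed
  moreover have "sum f ?R = sum f ?L"
    by (rule sum.reindex_bij_witness[of _ "\<lambda>i. n - i" "\<lambda>i. n - i"]) (auto simp: sym)
  moreover have "?M = (if even n then {n div 2} else {})" by auto
  ultimately have "(\<Sum>i=0..n. f i) = sum f ?M" using e by metis
  then show ?thesis using \<open>?M = _\<close> by (simp split: if_splits)
qed
lemma sq_nth: fixes A :: "bit fps"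
  shows "fps_nth (A*A) n = (if even n then fps_nth A (n div 2) else 0)"
proof -
  have "fps_nth (A*A) n = (\<Sum>i=0..n. fps_nth A i * fps_nth A (n-i))" by (rule fps_mult_nth)
  also have "\<dots> = (if even n then fps_nth A (n div 2) * fps_nth A (n - n div 2) else 0)"
    by (rule sum_sym_char2) (simp add: mult.commute)
  also have "\<dots> = (if even n then fps_nth A (n div 2) else 0)"
    by (auto elim!: evenE)
  finally show ?thesis .
qed

lemma two_fps: "(2::bit fps) = 0"
proof -
  have "(2::bit fps) = fps_const 2" by (rule numeral_fps_const)
  also have "(2::bit) = 0" by simp
  finally show ?thesis by simp
qed

declare s2.simps[simp del]
lemma s2_0[simp]: "s2 0 = 0" by (subst s2.simps) simp
lemma s2_even: "s2 (2*k) = s2 k"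
  by (subst s2.simps) simp
lemma s2_odd: "s2 (Suc (2*k)) = s2 k + 1"
  by (subst s2.simps) simp
lemma tm_even: "tm (2*k) = tm k" by (simp add: tm_def s2_even)
lemma tm_odd: "tm (Suc (2*k)) = tm k + 1" by (simp add: tm_def s2_odd)
lemma tm_0: "tm 0 = 0" by (simp add: tm_def)
lemma TM_F_nth: "fps_nth TM_F k = tm k" by (simp add: TM_F_def tm_0)

definition DD :: "bit fps" where "DD = Abs_fps (\<lambda>n. if even n then 1 else 0)"

lemma F_eq: "TM_F = TM_F*TM_F + fps_X*(TM_F*TM_F) + fps_X*DD"
proof (rule fps_ext)
  fix n
  show "fps_nth TM_F n = fps_nth (TM_F*TM_F + fps_X*(TM_F*TM_F) + fps_X*DD) n"
  proof (cases "even n")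
    case True
    then obtain k where k: "n = 2*k" by (auto elim: evenE)
    show ?thesis by (simp add: k sq_nth TM_F_nth tm_even DD_def)
  next
    case False
    then obtain k where k: "n = 2*k+1" by (auto elim: oddE)
    show ?thesis by (simp add: k sq_nth TM_F_nth tm_odd DD_def add.commute)
  qed
qed

lemma DD_inv: "(1 + fps_X*fps_X) * DD = 1"
proof (rule fps_ext)
  fix n
  show "fps_nth ((1 + fps_X*fps_X) * DD) n = fps_nth 1 n"
    by (cases n; cases "n - 1") (auto simp: distrib_right DD_def mult.assoc)
qed

lemma E1: "(1 + fps_X*fps_X) * TM_F = (1 + fps_X*fps_X) * (1 + fps_X) * (TM_F*TM_F) + fps_X"
proof -
  have "(1 + fps_X*fps_X) * TM_F = (1 + fps_X*fps_X) * (TM_F*TM_F + fps_X*(TM_F*TM_F) + fps_X*DD)"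
    using F_eq by metis
  also have "\<dots> = (1 + fps_X*fps_X) * (1 + fps_X) * (TM_F*TM_F) + fps_X * ((1 + fps_X*fps_X) * DD)"
    by (simp add: algebra_simps)
  finally show ?thesis using DD_inv by simp
qed

lemma F0: "fps_nth TM_F 0 = 0" by (simp add: TM_F_def)
lemma F1: "fps_nth TM_F 1 \<noteq> 0" using s2_odd[of 0] by (simp add: TM_F_def tm_def)
lemma G0: "fps_nth TM_G 0 = 0" by (simp add: TM_G_def fps_inv_def)
lemma FG: "TM_F oo TM_G = fps_X" unfolding TM_G_def by (rule fps_inv_right[OF F0 F1])

lemma E2: "(1 + TM_G*TM_G) * fps_X = (1 + TM_G*TM_G) * (1 + TM_G) * (fps_X*fps_X) + TM_G"
proof -
  have "((1 + fps_X*fps_X) * TM_F) oo TM_G = ((1 + fps_X*fps_X) * (1 + fps_X) * (TM_F*TM_F) + fps_X) oo TM_G"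
    using E1 by simp
  then show ?thesis
    by (simp add: fps_compose_mult_distrib[OF G0] fps_compose_add_distrib fps_X_fps_compose_startby0[OF G0] FG)
qed

lemma Z_cube: "(1 + fps_X*(1+TM_G))^3 = 1 + (fps_X::bit fps)"
proof -
  define x where "x = (fps_X::bit fps)"
  define g where "g = TM_G"
  have E: "(1 + g*g) * x - ((1 + g*g) * (1 + g) * (x*x) + g) = 0" using E2 unfolding x_def g_def by simp
  have "(1 + x*(1+g))^3 = 1 + x + x*((1 + g*g) * x - ((1 + g*g) * (1 + g) * (x*x) + g))
     + 2 * (x + 2*x*g + x^2*(1+3*g+g^2) + x^3*(1+g)*(1+g+g^2))"
    by algebra
  then have "(1 + x*(1+g))^3 = 1 + x" using E two_fps by simp
  then show ?thesis unfolding x_def g_def .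
qed

fun spread :: "nat \<Rightarrow> nat" where
  "spread n = (if n = 0 then 0 else 4 * spread (n div 2) + n mod 2)"
declare spread.simps[simp del]

lemma spread_eq: "spread k = 4 * spread (k div 2) + k mod 2"
  by (cases "k = 0") (simp_all add: spread.simps[of k] spread.simps[of 0])
lemma spread_0[simp]: "spread 0 = 0" by (simp add: spread.simps)
lemma spread_2k: "spread (2*k) = 4 * spread k" using spread_eq[of "2*k"] by simp
lemma spread_2k1: "spread (Suc (2*k)) = 4 * spread k + 1" using spread_eq[of "Suc (2*k)"] by simp

definition good :: "nat \<Rightarrow> bool" where "good q = (\<exists>k. q = 2 * spread k)"

lemma good_rec: "good n \<longleftrightarrow> (n mod 4 = 0 \<or> n mod 4 = 2) \<and> good (n div 4)"
proof
  assume "good n"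
  then obtain k where k: "n = 2 * spread k" by (auto simp: good_def)
  obtain q where q: "q = 2 * spread (k div 2)" by simp
  obtain r where r: "r = k mod 2" by simp
  have n: "n = 4 * q + 2 * r" using spread_eq[of k] k q r by simp
  have "r = 0 \<or> r = 1" using r by auto
  then have "(n mod 4 = 0 \<or> n mod 4 = 2) \<and> n div 4 = q" using n by presburger
  then show "(n mod 4 = 0 \<or> n mod 4 = 2) \<and> good (n div 4)"
    using q by (auto simp: good_def)
next
  assume a: "(n mod 4 = 0 \<or> n mod 4 = 2) \<and> good (n div 4)"
  then obtain k where k: "n div 4 = 2 * spread k" by (auto simp: good_def)
  have n: "n = 4 * (n div 4) + n mod 4" by simp
  from a show "good n"
  proof
    assume "n mod 4 = 0 \<or> n mod 4 = 2"
    then show "good n"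
    proof
      assume "n mod 4 = 0"
      then have "n = 2 * spread (2*k)" using n k spread_2k[of k] by simp
      then show ?thesis by (auto simp: good_def)
    next
      assume "n mod 4 = 2"
      then have "n = 2 * spread (Suc (2*k))" using n k spread_2k1[of k] by simp
      then show ?thesis by (auto simp: good_def)
    qed
  qed
qed

lemma good_0: "good 0" by (auto simp: good_def intro: exI[of _ 0])

definition PP :: "bit fps" where "PP = Abs_fps (\<lambda>q. if good q then 1 else 0)"
definition P4 :: "bit fps" where "P4 = Abs_fps (\<lambda>n. if 4 dvd n then fps_nth PP (n div 4) else 0)"

lemma P4_eq: "(PP*PP)*(PP*PP) = P4"
proof (rule fps_ext)
  fix n
  show "fps_nth ((PP*PP)*(PP*PP)) n = fps_nth P4 n"
  proof (cases "even n")
    case True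
    then obtain m where m: "n = 2*m" by (auto elim: evenE)
    show ?thesis
    proof (cases "even m")
      case True
      then obtain j where j: "m = 2*j" by (auto elim: evenE)
      show ?thesis by (simp add: sq_nth P4_def m j)
    next
      case False
      then have "\<not> 4 dvd n" using m by presburger
      then show ?thesis using False by (simp add: sq_nth P4_def m)
    qed
  next
    case False
    then have "\<not> 4 dvd n" by presburger
    then show ?thesis using False by (simp add: sq_nth P4_def)
  qed
qed

lemma PP_eq: "PP = (1 + fps_X*fps_X) * P4"
proof (rule fps_ext)
  fix n
  have rhs: "fps_nth ((1 + fps_X*fps_X) * P4) n = fps_nth P4 n + (if n < 2 then 0 else fps_nth P4 (n-2))"
    by (cases n; cases "n - 1") (auto simp: distrib_right mult.assoc)
  have g: "fps_nth PP n = (if (n mod 4 = 0 \<or> n mod 4 = 2) then fps_nth PP (n div 4) else 0)"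
    by (simp add: PP_def good_rec[of n])
  have "n mod 4 = 0 \<or> n mod 4 = 1 \<or> n mod 4 = 2 \<or> n mod 4 = 3" by auto
  then show "fps_nth PP n = fps_nth ((1 + fps_X*fps_X) * P4) n"
  proof (elim disjE)
    assume h: "n mod 4 = 0"
    then have "4 dvd n" "n < 2 \<or> \<not> 4 dvd (n-2)" by presburger+
    then show ?thesis using h unfolding rhs g by (auto simp: P4_def)
  next
    assume h: "n mod 4 = 1"
    then have "\<not> 4 dvd n" "n < 2 \<or> \<not> 4 dvd (n-2)" by presburger+
    then show ?thesis using h unfolding rhs g by (auto simp: P4_def)
  next
    assume h: "n mod 4 = 2"
    then have "\<not> 4 dvd n" "\<not> n < 2" "4 dvd (n-2)" "(n-2) div 4 = n div 4" by presburger+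
    then show ?thesis using h unfolding rhs g by (auto simp: P4_def)
  next
    assume h: "n mod 4 = 3"
    then have "\<not> 4 dvd n" "n < 2 \<or> \<not> 4 dvd (n-2)" by presburger+
    then show ?thesis using h unfolding rhs g by (auto simp: P4_def)
  qed
qed

lemma PP0: "fps_nth PP 0 = 1" by (simp add: PP_def good_0)

lemma Q_eq: "(1 + fps_X)^2 * PP^3 = (1::bit fps)"
proof -
  have "PP * (1 - (1 + fps_X)^2 * PP^3) = PP - (1 + fps_X*fps_X) * ((PP*PP)*(PP*PP)) - 2 * (fps_X * ((PP*PP)*(PP*PP)))"
    by algebra
  also have "\<dots> = 0" using PP_eq P4_eq two_fps by simp
  finally have "PP * (1 - (1 + fps_X)^2 * PP^3) = 0" .
  moreover have "PP \<noteq> 0" using PP0 by auto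
  ultimately show ?thesis by simp
qed

definition BB :: "bit fps" where "BB = (1 + fps_X)^3 * P4"

lemma BB_cube: "BB^3 = 1 + fps_X"
proof -
  have "BB^3 = (1 + fps_X) * ((1 + fps_X)^2 * PP^3)^4"
    unfolding BB_def P4_eq[symmetric] by algebra
  then show ?thesis using Q_eq by simp
qed

lemma cube_inj:
  fixes A B :: "bit fps"
  assumes "A^3 = B^3" "fps_nth A 0 = 1" "fps_nth B 0 = 1"
  shows "A = B"
proof -
  have "(A - B) * (A*A + A*B + B*B) = A^3 - B^3" by algebra
  then have z: "(A - B) * (A*A + A*B + B*B) = 0" using assms by simp
  have "fps_nth (A*A + A*B + B*B) 0 = 1 + 1 + 1" using assms by (simp only: fps_add_nth fps_mult_nth_0) simp
  then have "fps_nth (A*A + A*B + B*B) 0 = 1" by simp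
  then have "A*A + A*B + B*B \<noteq> 0" by (metis fps_zero_nth zero_neq_one)
  with z show ?thesis by simp
qed

lemma A_eq_B: "1 + fps_X*(1+TM_G) = BB"
proof (rule cube_inj)
  show "(1 + fps_X*(1+TM_G))^3 = BB^3" using Z_cube BB_cube by simp
  show "fps_nth (1 + fps_X*(1+TM_G)) 0 = 1" by simp
  show "fps_nth BB 0 = 1" by (simp add: BB_def P4_def PP0)
qed

lemma BB_nth: "fps_nth BB n = fps_nth PP (n div 4)"
proof -
  have "BB = P4 + fps_X*P4 + fps_X*(fps_X*P4) + fps_X*(fps_X*(fps_X*P4)) + 2 * (fps_X*P4 + fps_X*(fps_X*P4))"
    unfolding BB_def by algebra
  then have B: "BB = P4 + fps_X*P4 + fps_X*(fps_X*P4) + fps_X*(fps_X*(fps_X*P4))" using two_fps by simp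
  have rhs: "fps_nth BB n = fps_nth P4 n + (if n < 1 then 0 else fps_nth P4 (n-1))
     + (if n < 2 then 0 else fps_nth P4 (n-2)) + (if n < 3 then 0 else fps_nth P4 (n-3))"
    unfolding B by (cases n; cases "n - 1"; cases "n - 2") auto
  have "n mod 4 = 0 \<or> n mod 4 = 1 \<or> n mod 4 = 2 \<or> n mod 4 = 3" by auto
  then show ?thesis
  proof (elim disjE)
    assume h: "n mod 4 = 0"
    then have "4 dvd n" "n < 1 \<or> \<not> 4 dvd (n-1)" "n < 2 \<or> \<not> 4 dvd (n-2)" "n < 3 \<or> \<not> 4 dvd (n-3)" by presburger+
    then show ?thesis unfolding rhs by (auto simp: P4_def)
  next
    assume h: "n mod 4 = 1"
    then have "\<not> 4 dvd n" "\<not> n < 1" "4 dvd (n-1)" "(n-1) div 4 = n div 4" "n < 2 \<or> \<not> 4 dvd (n-2)" "n < 3 \<or> \<not> 4 dvd (n-3)" by presburger+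
    then show ?thesis unfolding rhs by (auto simp: P4_def)
  next
    assume h: "n mod 4 = 2"
    then have "\<not> 4 dvd n" "\<not> n < 2" "4 dvd (n-2)" "(n-2) div 4 = n div 4" "n < 1 \<or> \<not> 4 dvd (n-1)" "n < 3 \<or> \<not> 4 dvd (n-3)" by presburger+
    then show ?thesis unfolding rhs by (auto simp: P4_def)
  next
    assume h: "n mod 4 = 3"
    then have "\<not> 4 dvd n" "\<not> n < 3" "4 dvd (n-3)" "(n-3) div 4 = n div 4" "n < 1 \<or> \<not> 4 dvd (n-1)" "n < 2 \<or> \<not> 4 dvd (n-2)" by presburger+
    then show ?thesis unfolding rhs by (auto simp: P4_def)
  qed
qed

lemma G_nth: "m \<ge> 1 \<Longrightarrow> fps_nth TM_G m = (if good ((m+1) div 4) then 1 else 0)"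
proof -
  assume m: "m \<ge> 1"
  have "fps_nth (1 + fps_X*(1+TM_G)) (Suc m) = fps_nth TM_G m" using m by simp
  then have "fps_nth TM_G m = fps_nth BB (Suc m)" using A_eq_B by simp
  then show ?thesis by (simp add: BB_nth PP_def)
qed

lemma onesG_eq: "onesG = {m. m \<ge> 1 \<and> good ((m+1) div 4)}"
  by (auto simp: onesG_def cG_def G_nth split: if_splits)

lemma spread_Suc: "spread (Suc n) \<ge> spread n + 1"
proof (induction n rule: less_induct)
  case (less n)
  show ?case
  proof (cases "even n")
    case True
    then obtain k where k: "n = 2*k" by (auto elim: evenE)
    show ?thesis by (simp add: k spread_2k spread_2k1)
  next
    case False
    then obtain k where k: "n = Suc (2*k)" by (auto elim: oddE)
    have "k < n" using k by simp
    then have "spread (Suc k) \<ge> spread k + 1" by (rule less.IH)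
    moreover have "Suc n = 2 * Suc k" using k by simp
    then have "spread (Suc n) = 4 * spread (Suc k)" using spread_2k by metis
    moreover have "spread n = 4 * spread k + 1" using k spread_2k1 by simp
    ultimately show ?thesis by linarith
  qed
qed

lemma spread_mono: "strict_mono spread"
proof -
  have "spread n < spread (Suc n)" for n using spread_Suc[of n] by simp
  then show ?thesis unfolding strict_mono_Suc_iff by blast
qed

lemma spread_pos: "k \<ge> 1 \<Longrightarrow> spread k \<ge> 1"
  using spread_mono[THEN strict_monoD, of 0 k] by simp

definition hh :: "nat \<Rightarrow> nat" where
  "hh i = 8 * spread ((i+2) div 4) + (i+2) mod 4 - 1"

lemma hh_Suc: "hh i < hh (Suc i)"
proof (cases "(i+2) mod 4 = 3")
  case True
  then have a: "(Suc i + 2) div 4 = Suc ((i+2) div 4)" "(Suc i + 2) mod 4 = 0" by presburger+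
  have "spread (Suc ((i+2) div 4)) \<ge> spread ((i+2) div 4) + 1" by (rule spread_Suc)
  then show ?thesis unfolding hh_def a using True by simp
next
  case False
  then have a: "(Suc i + 2) div 4 = (i+2) div 4" "(Suc i + 2) mod 4 = Suc ((i+2) mod 4)" by presburger+
  have "8 * spread ((i+2) div 4) + (i+2) mod 4 \<ge> 1"
  proof (cases "(i+2) div 4 = 0")
    case True then show ?thesis by presburger
  next
    case False then show ?thesis using spread_pos[of "(i+2) div 4"] by simp
  qed
  then show ?thesis unfolding hh_def a by simp
qed

lemma hh_mono: "strict_mono hh"
  unfolding strict_mono_Suc_iff using hh_Suc by blast

lemma range_hh: "range hh = onesG"
proof (rule set_eqI, rule iffI)
  fix m assume "m \<in> range hh"
  then obtain i where m: "m = hh i" by auto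
  define k where "k = (i+2) div 4"
  define r where "r = (i+2) mod 4"
  have ir: "i + 2 = 4*k + r" "r < 4" unfolding k_def r_def by auto
  have m2: "m = 8 * spread k + r - 1" using m unfolding hh_def k_def r_def by simp
  have pos: "8 * spread k + r \<ge> 2"
  proof (cases "k = 0")
    case True then show ?thesis using ir by simp
  next
    case False then show ?thesis using spread_pos[of k] by simp
  qed
  have "(m+1) div 4 = 2 * spread k" using m2 pos ir(2) by simp
  then show "m \<in> onesG" unfolding onesG_eq good_def using m2 pos by auto
next
  fix m assume "m \<in> onesG"
  then obtain k where m: "m \<ge> 1" "(m+1) div 4 = 2 * spread k" unfolding onesG_eq good_def by auto
  define r where "r = (m+1) mod 4"
  have d: "m + 1 = (m+1) div 4 * 4 + (m+1) mod 4" by (rule div_mult_mod_eq[symmetric])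
  have m1: "m + 1 = 8 * spread k + r" "r < 4" using d m(2) unfolding r_def by linarith+
  have ge: "4*k + r \<ge> 2"
  proof (cases "k = 0")
    case True then show ?thesis using m1 m(1) by simp
  next
    case False then show ?thesis by simp
  qed
  have e: "4*k + r - 2 + 2 = r + 4*k" using ge by simp
  have "(r + 4*k) div 4 = k" "(r + 4*k) mod 4 = r" using m1(2) by simp_all
  then have "hh (4*k + r - 2) = m" unfolding hh_def e using m1 by simp
  then show "m \<in> range hh" by (metis rangeI)
qed

lemma infinite_onesG: "infinite onesG"
proof -
  have "inj hh" using hh_mono strict_mono_imp_inj_on by blast
  then have "infinite (range hh)" using finite_imageD infinite_UNIV_nat by blast
  then show ?thesis using range_hh by simp
qed

lemma enum_hh: "enumerate onesG n = hh n"
proof (induction n)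
  case 0
  show ?case unfolding enumerate_0
  proof (rule Least_equality)
    show "hh 0 \<in> onesG" using range_hh by auto
    fix y assume "y \<in> onesG"
    then obtain j where "y = hh j" using range_hh by auto
    then show "hh 0 \<le> y" using hh_mono by (metis le0 strict_mono_less_eq)
  qed
next
  case (Suc n)
  show ?case unfolding enumerate_Suc''[OF infinite_onesG] Suc
  proof (rule Least_equality)
    show "hh (Suc n) \<in> onesG \<and> hh n < hh (Suc n)" using range_hh hh_Suc by auto
    fix y assume y: "y \<in> onesG \<and> hh n < y"
    then obtain j where j: "y = hh j" using range_hh by auto
    then have "n < j" using y hh_mono by (metis strict_mono_less)
    then show "hh (Suc n) \<le> y" using j hh_mono by (metis Suc_leI strict_mono_less_eq)
  qed
qed

lemma aG_form: "k \<ge> 1 \<Longrightarrow> r < 4 \<Longrightarrow> aG (4*k + r - 1) = 8 * spread k + r - 1"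
proof -
  assume k: "k \<ge> 1" and r: "r < 4"
  have "4*k + r - 1 - 1 = 4*k + r - 2" by simp
  then have "aG (4*k + r - 1) = hh (4*k + r - 2)" using k by (simp add: aG_def enum_hh)
  moreover have e: "4*k + r - 2 + 2 = r + 4*k" using k by simp
  moreover have "(r + 4*k) div 4 = k" "(r + 4*k) mod 4 = r" using r by simp_all
  ultimately show ?thesis unfolding hh_def by (simp only:)
qed

theorem mainTheorem6:
  shows "infinite onesG \<and> aG 1 = 1 \<and> aG 2 = 2 \<and> aG 3 = 7 \<and>
    (\<forall>n\<ge>1. aG (4*n) = aG (4*n - 1) + 1 \<and>
            aG (4*n + 1) = aG (4*n - 1) + 2 \<and>
            aG (4*n + 2) = aG (4*n - 1) + 3 \<and>
            aG (8*n + 3) = aG (8*n) + 7 \<and>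
            aG (8*n + 7) = 4 * aG (4*n + 3) + 3)"
proof (intro conjI allI impI)
  show "infinite onesG" by (rule infinite_onesG)
  have s1: "spread 1 = 1" using spread_2k1[of 0] by simp
  show "aG 1 = 1" by (simp add: aG_def enum_hh hh_def)
  show "aG 2 = 2" by (simp add: aG_def enum_hh hh_def)
  show "aG 3 = 7" using aG_form[of 1 0] s1 by simp
  fix n :: nat assume n: "n \<ge> 1"
  have sp: "spread n \<ge> 1" using spread_pos n by simp
  have a0: "aG (4*n - 1) = 8 * spread n - 1" using aG_form[of n 0] n by simp
  have a1: "aG (4*n) = 8 * spread n" using aG_form[of n 1] n by simp
  have a2: "aG (4*n + 1) = 8 * spread n + 1" using aG_form[of n 2] n by simp
  have a3: "aG (4*n + 2) = 8 * spread n + 2" using aG_form[of n 3] n by simp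
  show "aG (4*n) = aG (4*n - 1) + 1" using a0 a1 sp by simp
  show "aG (4*n + 1) = aG (4*n - 1) + 2" using a0 a2 sp by simp
  show "aG (4*n + 2) = aG (4*n - 1) + 3" using a0 a3 sp by simp
  have e1: "8*n + 3 = 4 * Suc (2*n) + 0 - 1" by simp
  have b1: "aG (8*n + 3) = 8 * spread (Suc (2*n)) - 1" unfolding e1 using aG_form[of "Suc (2*n)" 0] by simp
  have e2: "8*n = 4 * (2*n) + 1 - 1" by simp
  have b2: "aG (8*n) = 8 * spread (2*n)" unfolding e2 using aG_form[of "2*n" 1] n by simp
  show "aG (8*n + 3) = aG (8*n) + 7" using b1 b2 by (simp add: spread_2k spread_2k1)
  have e3: "8*n + 7 = 4 * (2 * Suc n) + 0 - 1" by simp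
  have c1: "aG (8*n + 7) = 32 * spread (Suc n) - 1" unfolding e3 using aG_form[of "2 * Suc n" 0] spread_2k[of "Suc n"] by simp
  have e4: "4*n + 3 = 4 * Suc n + 0 - 1" by simp
  have c2: "aG (4*n + 3) = 8 * spread (Suc n) - 1" unfolding e4 using aG_form[of "Suc n" 0] by simp
  have sp2: "spread (Suc n) \<ge> 1" using spread_pos by simp
  show "aG (8*n + 7) = 4 * aG (4*n + 3) + 3" using c1 c2 sp2 by simp
qed
end
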